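(* The numbers $s_k(m)$ and $s(m)$ satisfy: (i) $s(0)=1$; (ii) $s_0(1)=1$ and $s_k(1)=0$ for $k>0$; (iii) $s_0(2)=0$, $s_1(2)=1$ and $s_k(2)=0$ for $k>1$; (iv) for every integer $m\ge1$: $s_m(2^m)=1$, $$s_{m-1}(2^m)=\sum_{j=0}^{m-1}\sum_{k=0}^{m-2}s_k\big(2^m-(2^{m-1}+\dots+2^j)\big),$$ and $s_k(2^m)=0$ for $k\ne m,m-1$; (v) for every integer $m\ge1$ and $l=0,1,\dots,m-1$: $$s_m(2^m+\dots+2^l)=1+\sum_{j=l}^{m-1}\sum_{k=0}^{m-1}s_k(2^j+\dots+2^l),$$ $$s_{m-1}(2^m+\dots+2^l)=\sum_{j=0}^{m-1}\sum_{k=0}^{m-2}s_k\big((2^m+\dots+2^l)-(2^{m-1}+\dots+2^j)\big),$$ and $s_k(2^m+\dots+2^l)=0$ for $k\ne m,m-1$; (vi) for $l=2,3,\dots,m-1$ and $a_0,\dots,a_{l-2}\in\{0,1\}$ not all $0$, writing $A=a_{l-2}2^{l-2}+\dots+a_02^0$: $$s_m(2^m+\dots+2^l+A)=\sum_{k=0}^{m-1}s_k(A)+\sum_{j=l}^{m-1}\sum_{k=0}^{m-1}s_k(2^j+\dots+2^l+A),$$ $$s_{m-1}(2^m+\dots+2^l+A)=\sum_{j=0}^{m-1}\sum_{k=0}^{m-2}s_k\big((2^m+\dots+2^l+A)-(2^{m-1}+\dots+2^j)\big),$$ and $s_k(2^m+\dots+2^l+A)=0$ for $k\ne m,m-1$;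 (vii) for $m>1$ and $a_0,\dots,a_{m-2}\in\{0,1\}$ not all $0$, writing $B=a_{m-2}2^{m-2}+\dots+a_02^0$: $$s_m(2^m+B)=\sum_{k=0}^{m-1}s_k(B),$$ $$s_{m-1}(2^m+B)=\sum_{j=0}^{m-1}\sum_{k=0}^{m-2}s_k\big((2^m+B)-(2^{m-1}+\dots+2^j)\big),$$ and $s_k(2^m+B)=0$ for $k\ne m,m-1$.
   Context: For a natural number $m>0$ and $k\in\{0,1,2,\dots\}$, $S_k(m)$ is the set of all finite sequences $((m_1,l_1),\dots,(m_t,l_t))$ with $t\ge1$ of pairs of natural numbers such that $k=m_1>m_2>\dots>m_t\ge0$, $m_j\ge l_j\ge0$ for all $j$, and $m=\sum_{j=1}^t\sum_{p=0}^{l_j}2^{m_j-p}$; $s_k(m)=|S_k(m)|$. For $m>0$, $s(m)=\sum_{k\ge0}s_k(m)$ (a finite sum, since $s_k(m)=0$ for all but finitely many $k$), and $s(0)=1$ by convention. Empty sums are $0$. *)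

theory Defs
  imports Main
begin

definition S_set :: "nat \<Rightarrow> nat \<Rightarrow> (nat \<times> nat) list set" where
  "S_set k m = {ps. 0 < m \<and> ps \<noteq> [] \<and> fst (hd ps) = k
      \<and> sorted_wrt (>) (map fst ps)
      \<and> (\<forall>(a, b) \<in> set ps. b \<le> a)
      \<and> m = (\<Sum>(a, b) \<leftarrow> ps. \<Sum>p = 0..b. (2::nat) ^ (a - p))}"

definition s_k :: "nat \<Rightarrow> nat \<Rightarrow> nat" where
  "s_k k m = card (S_set k m)"

definition s :: "nat \<Rightarrow> nat" where
  "s m = (if m = 0 then 1 else (\<Sum>k \<in> {k. s_k k m \<noteq> 0}. s_k k m))"

definition gs :: "nat \<Rightarrow> nat \<Rightarrow> nat" where
  "gs a b = (\<Sum>i \<in> {b..a}. (2::nat) ^ i)"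

end

theory Submission
  imports Defs
begin


lemma gs_empty: "a < b \<Longrightarrow> gs a b = 0"
  by (simp add: gs_def)

lemma gs_eq: "b \<le> a \<Longrightarrow> gs a b + 2^b = 2^(Suc a)"
proof (induction a)
  case 0 then show ?case by (simp add: gs_def)
next
  case (Suc a)
  show ?case
  proof (cases "b = Suc a")
    case True then show ?thesis by (simp add: gs_def)
  next
    case False
    then have "b \<le> a" using Suc.prems by simp
    then have "gs (Suc a) b = gs a b + 2^(Suc a)" by (simp add: gs_def)
    then show ?thesis using Suc.IH[OF \<open>b \<le> a\<close>] by simp
  qed
qed

lemma gs_lt: "gs a b < 2^(Suc a)"
proof (cases "b \<le> a")
  case True
  have "(0::nat) < 2^b" by simp
  then show ?thesis using gs_eq[OF True] by linarith
qed (simp add: gs_empty)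

lemma gs_ge: "b \<le> a \<Longrightarrow> 2^a \<le> gs a b"
proof -
  assume h: "b \<le> a"
  have "(2::nat)^b \<le> 2^a" using h by (simp add: power_increasing)
  moreover have "(2::nat)^(Suc a) = 2^a + 2^a" by simp
  ultimately show ?thesis using gs_eq[OF h] by linarith
qed

lemma val_gs: "b \<le> a \<Longrightarrow> (\<Sum>p = 0..b. (2::nat)^(a-p)) = gs a (a-b)"
proof (induction b)
  case 0 then show ?case by (simp add: gs_def)
next
  case (Suc b)
  have "gs a (a - Suc b) + 2^(a - Suc b) = 2^(Suc a)" using gs_eq[of "a - Suc b" a] by simp
  moreover have "gs a (a - b) + 2^(a - b) = 2^(Suc a)" using gs_eq[of "a - b" a] by simp
  moreover have "(2::nat)^(a-b) = 2 * 2^(a - Suc b)" using Suc.prems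
    by (metis Suc_diff_Suc Suc_le_lessD power_Suc)
  ultimately have "gs a (a - Suc b) = gs a (a-b) + 2^(a - Suc b)" by linarith
  then show ?case using Suc by simp
qed

definition vl :: "(nat \<times> nat) list \<Rightarrow> nat" where
  "vl ps = (\<Sum>(a, b) \<leftarrow> ps. \<Sum>p = 0..b. (2::nat) ^ (a - p))"

lemma vl_Nil[simp]: "vl [] = 0" by (simp add: vl_def)
lemma vl_Cons[simp]: "vl ((a,b)#r) = (\<Sum>p = 0..b. (2::nat) ^ (a - p)) + vl r" by (simp add: vl_def)

lemma S_set_alt: "S_set k m = {ps. 0 < m \<and> ps \<noteq> [] \<and> fst (hd ps) = k
      \<and> sorted_wrt (>) (map fst ps)
      \<and> (\<forall>(a, b) \<in> set ps. b \<le> a) \<and> m = vl ps}"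
  by (simp add: S_set_def vl_def)

lemma vl_bound: "sorted_wrt (>) (map fst ps) \<Longrightarrow> (\<forall>(a, b) \<in> set ps. b \<le> a)
   \<Longrightarrow> (\<forall>a \<in> fst ` set ps. a < n) \<Longrightarrow> vl ps < 2^(Suc n)"
proof (induction ps arbitrary: n)
  case Nil then show ?case by simp
next
  case (Cons p r)
  obtain a b where p: "p = (a,b)" by force
  have ba: "b \<le> a" and an: "a < n" using Cons.prems p by auto
  have "vl r < 2^(Suc a)" using Cons.prems p by (intro Cons.IH) auto
  moreover have "(\<Sum>p = 0..b. (2::nat) ^ (a - p)) < 2^(Suc a)"
    using val_gs[OF ba] gs_lt by simp
  moreover have "(2::nat)^(Suc a) + 2^(Suc a) \<le> 2^(Suc n)"
    using an by (metis Suc_leI mult_2 power_Suc power_increasing_iff one_less_numeral_iff semiring_norm(76) Suc_le_mono)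
  ultimately show ?case using p by simp
qed

lemma S_bound: assumes "ps \<in> S_set k X" shows "2^k \<le> X" "X < 2^(Suc (Suc k))"
proof -
  obtain b r where ps: "ps = (k,b)#r" using assms unfolding S_set_alt
    by (cases ps) auto
  have ba: "b \<le> k" using assms ps by (auto simp: S_set_alt)
  have X: "X = vl ps" using assms by (auto simp: S_set_alt)
  show "2^k \<le> X" using X ps val_gs[OF ba] gs_ge[of "k-b" k] by simp
  have "vl ps < 2^(Suc (Suc k))"
    by (rule vl_bound) (use assms in \<open>auto simp: S_set_alt ps less_Suc_eq_le\<close>)
  then show "X < 2^(Suc (Suc k))" using X by simp
qed

lemma s_k_zero: "X < 2^k \<or> 2^(Suc (Suc k)) \<le> X \<Longrightarrow> s_k k X = 0"
  unfolding s_k_def using S_bound by (metis card.empty equals0I not_le)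

lemma val_pos: "b \<le> a \<Longrightarrow> 0 < (\<Sum>p = 0..b. (2::nat) ^ (a - p))"
  by (simp add: sum_pos2[where i=0])

lemma S_zero[simp]: "S_set k 0 = {}" by (simp add: S_set_def)

lemma S_decomp: assumes "0 < X"
  shows "S_set k X = (\<lambda>j. [(k, k-j)]) ` {j. j \<le> k \<and> gs k j = X}
     \<union> (\<Union>j\<in>{..k}. \<Union>k'\<in>{..<k}. (\<lambda>r. (k,k-j)#r) ` S_set k' (X - gs k j))"
proof (intro equalityI subsetI)
  fix ps assume ps: "ps \<in> S_set k X"
  then obtain b r where psd: "ps = (k,b)#r" unfolding S_set_alt by (cases ps) auto
  have bk: "b \<le> k" using ps psd by (auto simp: S_set_alt)
  define j where "j = k - b"
  have bj: "b = k - j" "j \<le> k" using bk j_def by auto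
  have val: "(\<Sum>p = 0..b. (2::nat) ^ (k - p)) = gs k j" using val_gs[OF bk] j_def by simp
  have X: "X = gs k j + vl r" using ps psd val by (simp add: S_set_alt)
  show "ps \<in> (\<lambda>j. [(k, k-j)]) ` {j. j \<le> k \<and> gs k j = X}
     \<union> (\<Union>j\<in>{..k}. \<Union>k'\<in>{..<k}. (\<lambda>r. (k,k-j)#r) ` S_set k' (X - gs k j))"
  proof (cases r)
    case Nil
    then show ?thesis using X psd bj by auto
  next
    case (Cons q r')
    obtain c d where q: "q = (c,d)" by force
    have ck: "c < k" using ps psd Cons q by (auto simp: S_set_alt)
    have dc: "d \<le> c" using ps psd Cons q by (auto simp: S_set_alt)
    have "0 < vl r" using Cons q val_pos[OF dc] by simp
    then have "r \<in> S_set c (X - gs k j)"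
      using ps psd Cons q X by (auto simp: S_set_alt)
    then show ?thesis using psd bj ck by blast
  qed
next
  fix ps assume "ps \<in> (\<lambda>j. [(k, k-j)]) ` {j. j \<le> k \<and> gs k j = X}
     \<union> (\<Union>j\<in>{..k}. \<Union>k'\<in>{..<k}. (\<lambda>r. (k,k-j)#r) ` S_set k' (X - gs k j))"
  then show "ps \<in> S_set k X"
  proof (elim UnE)
    assume "ps \<in> (\<lambda>j. [(k, k-j)]) ` {j. j \<le> k \<and> gs k j = X}"
    then obtain j where j: "j \<le> k" "gs k j = X" "ps = [(k,k-j)]" by auto
    show ?thesis using j assms val_gs[of "k-j" k] by (simp add: S_set_alt)
  next
    assume "ps \<in> (\<Union>j\<in>{..k}. \<Union>k'\<in>{..<k}. (\<lambda>r. (k,k-j)#r) ` S_set k' (X - gs k j))"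
    then obtain j k' r where jr: "j \<le> k" "k' < k" "r \<in> S_set k' (X - gs k j)" "ps = (k,k-j)#r"
      by auto
    have rne: "r \<noteq> []" "fst (hd r) = k'" "sorted_wrt (>) (map fst r)"
      "\<forall>(a, b) \<in> set r. b \<le> a" "X - gs k j = vl r" "0 < X - gs k j"
      using jr(3) by (auto simp: S_set_alt)
    have "\<forall>a\<in>set (map fst r). a \<le> k'"
    proof (cases r)
      case (Cons q r')
      then show ?thesis using rne by (auto simp: le_less)
    qed (use rne in simp)
    then have "\<forall>a\<in>set (map fst r). a < k" using jr(2) by auto
    then show ?thesis using jr rne val_gs[of "k-j" k] assms
      by (auto simp: S_set_alt)
  qed
qed

lemma S_finite: "finite (S_set k X)"
proof (induction k arbitrary: X rule: less_induct)
  case (less k)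
  show ?case
  proof (cases "X = 0")
    case False
    then show ?thesis using less by (subst S_decomp) auto
  qed simp
qed

lemma s_k_rec: assumes "0 < X"
  shows "s_k k X = card {j. j \<le> k \<and> gs k j = X} + (\<Sum>j\<le>k. \<Sum>k'<k. s_k k' (X - gs k j))"
proof -
  let ?A = "(\<lambda>j. [(k, k-j)]) ` {j. j \<le> k \<and> gs k j = X}"
  let ?B = "\<lambda>j k'. (\<lambda>r. (k,k-j)#r) ` S_set k' (X - gs k j)"
  have cA: "card ?A = card {j. j \<le> k \<and> gs k j = X}"
    by (rule card_image) (auto simp: inj_on_def)
  have cB: "card (?B j k') = s_k k' (X - gs k j)" for j k'
    unfolding s_k_def by (rule card_image) (auto simp: inj_on_def)
  have dB: "?B j k' \<inter> ?B j k'' = {}" if "k' \<noteq> k''" for j k' k''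
    using that by (auto simp: S_set_alt)
  have dB2: "(\<Union>k'\<in>{..<k}. ?B j k') \<inter> (\<Union>k'\<in>{..<k}. ?B j' k') = {}" if "j \<noteq> j'" "j \<le> k" "j' \<le> k" for j j'
    using that by auto
  have c1: "card (\<Union>k'\<in>{..<k}. ?B j k') = (\<Sum>k'<k. s_k k' (X - gs k j))" for j
    by (subst card_UN_disjoint) (use dB cB S_finite in auto)
  have c2: "card (\<Union>j\<in>{..k}. \<Union>k'\<in>{..<k}. ?B j k') = (\<Sum>j\<le>k. \<Sum>k'<k. s_k k' (X - gs k j))"
    by (subst card_UN_disjoint) (use dB2 c1 S_finite in auto)
  have dis: "?A \<inter> (\<Union>j\<in>{..k}. \<Union>k'\<in>{..<k}. ?B j k') = {}"
    by (auto simp: S_set_alt)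
  have "s_k k X = card (?A \<union> (\<Union>j\<in>{..k}. \<Union>k'\<in>{..<k}. ?B j k'))"
    unfolding s_k_def using S_decomp[OF assms] by simp
  also have "\<dots> = card ?A + card (\<Union>j\<in>{..k}. \<Union>k'\<in>{..<k}. ?B j k')"
    by (rule card_Un_disjoint) (use dis S_finite in auto)
  finally show ?thesis using cA c2 by simp
qed


lemma s_k_0[simp]: "s_k k 0 = 0" by (simp add: s_k_def)

lemma gs_split: "l < j \<Longrightarrow> j \<le> m \<Longrightarrow> gs m l = gs m j + gs (j-1) l"
proof -
  assume h: "l < j" "j \<le> m"
  have "gs m l + 2^l = 2^(Suc m)" using h gs_eq[of l m] by simp
  moreover have "gs m j + 2^j = 2^(Suc m)" using h gs_eq[of j m] by simp
  moreover have "gs (j-1) l + 2^l = 2^j" using h gs_eq[of l "j-1"] by simp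
  ultimately show ?thesis by linarith
qed

lemma G: assumes lm: "l \<le> m" and R: "R < 2^(l-1)"
  shows "s_k m (gs m l + R) = (if R = 0 then 1 else 0) + (\<Sum>k<m. s_k k R)
     + (\<Sum>j\<in>{l..<m}. \<Sum>k<m. s_k k (gs j l + R))"
proof -
  let ?X = "gs m l + R"
  define f where "f j = (\<Sum>k<m. s_k k (?X - gs m j))" for j
  have "(0::nat) < 2^m" by simp
  then have Xpos: "0 < ?X" using gs_ge[OF lm] by linarith
  have big: "?X < gs m j" if "j < l" for j
  proof -
    have "gs m j = gs m l + gs (l-1) j" using gs_split[of j l m] that lm by simp
    moreover have "2^(l-1) \<le> gs (l-1) j" using gs_ge[of j "l-1"] that by simp
    ultimately show ?thesis using R by linarith
  qed
  have f0: "f j = 0" if "j < l" for j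
    using big[OF that] by (simp add: f_def)
  have fl: "f l = (\<Sum>k<m. s_k k R)" by (simp add: f_def)
  have fS: "f (Suc j) = (\<Sum>k<m. s_k k (gs j l + R))" if "l \<le> j" "j < m" for j
    using gs_split[of l "Suc j" m] that by (simp add: f_def)
  have card: "card {j. j \<le> m \<and> gs m j = ?X} = (if R = 0 then 1 else 0)"
  proof -
    have "{j. j \<le> m \<and> gs m j = ?X} = (if R = 0 then {l} else {})"
    proof (intro set_eqI iffI)
      fix j assume j: "j \<in> {j. j \<le> m \<and> gs m j = ?X}"
      have "\<not> j < l" using big j by fastforce
      moreover have "\<not> l < j"
      proof
        assume "l < j"
        then have "gs m l = gs m j + gs (j-1) l" using gs_split[of l j m] j by auto
        moreover have "0 < gs (j-1) l"
        proof -
          have "(0::nat) < 2^(j-1)" by simp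
          moreover have "2^(j-1) \<le> gs (j-1) l" using gs_ge[of l "j-1"] \<open>l < j\<close> by simp
          ultimately show ?thesis by linarith
        qed
        ultimately show False using j by simp
      qed
      ultimately show "j \<in> (if R = 0 then {l} else {})" using j by auto
    next
      fix j assume "j \<in> (if R = 0 then {l} else {})"
      then show "j \<in> {j. j \<le> m \<and> gs m j = ?X}" using lm by (auto split: if_splits)
    qed
    then show ?thesis by simp
  qed
  have "(\<Sum>j\<le>m. f j) = (\<Sum>j\<in>{..<l}. f j) + (\<Sum>j\<in>{l..m}. f j)"
  proof -
    have "{..m} = {..<l} \<union> {l..m}" using lm by auto
    moreover have "{..<l} \<inter> {l..m} = {}" by auto
    ultimately show ?thesis by (simp add: sum.union_disjoint)
  qed
  also have "(\<Sum>j\<in>{..<l}. f j) = 0" using f0 by simp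
  also have "(\<Sum>j\<in>{l..m}. f j) = f l + (\<Sum>j\<in>{Suc l..m}. f j)"
    using lm by (rule sum.atLeast_Suc_atMost)
  also have "{Suc l..m} = Suc ` {l..<m}" by auto
  also have "(\<Sum>j\<in>Suc ` {l..<m}. f j) = (\<Sum>j\<in>{l..<m}. f (Suc j))"
    using sum.reindex[of Suc "{l..<m}" f] by (simp add: comp_def del: image_Suc_atLeastLessThan)
  also have "\<dots> = (\<Sum>j\<in>{l..<m}. \<Sum>k<m. s_k k (gs j l + R))"
    by (rule sum.cong) (auto simp: fS)
  finally have "(\<Sum>j\<le>m. f j) = (\<Sum>k<m. s_k k R) + (\<Sum>j\<in>{l..<m}. \<Sum>k<m. s_k k (gs j l + R))"
    using fl by simp
  then show ?thesis using s_k_rec[OF Xpos, of m] card unfolding f_def by simp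
qed

lemma L_zero: "2^m \<le> X \<Longrightarrow> X < 2^(Suc m) \<Longrightarrow> k \<noteq> m \<Longrightarrow> k \<noteq> m - 1 \<Longrightarrow> s_k k X = 0"
proof (rule s_k_zero)
  assume h: "2^m \<le> X" "X < 2^(Suc m)" "k \<noteq> m" "k \<noteq> m - 1"
  show "X < 2^k \<or> 2^(Suc (Suc k)) \<le> X"
  proof (cases "k > m")
    case True
    then have "(2::nat)^(Suc m) \<le> 2^k" using power_increasing[of "Suc m" k "2::nat"] by linarith
    then show ?thesis using h by simp
  next
    case False
    then have "Suc (Suc k) \<le> m" using h by auto
    then have "(2::nat)^(Suc (Suc k)) \<le> 2^m" by (simp add: power_increasing del: power_Suc)
    then show ?thesis using h by simp
  qed
qed

lemma L_m1: assumes "1 \<le> m" "2^m \<le> X"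
  shows "s_k (m-1) X = (\<Sum>j<m. \<Sum>k<m - 1. s_k k (X - gs (m-1) j))"
proof -
  have "(0::nat) < 2^m" by simp
  then have X: "0 < X" using assms(2) by linarith
  have "gs (m-1) j < X" for j
  proof -
    have "gs (m-1) j < 2^(Suc (m-1))" by (rule gs_lt)
    also have "Suc (m-1) = m" using assms by simp
    finally show ?thesis using assms(2) by linarith
  qed
  then have "{j. j \<le> m - 1 \<and> gs (m-1) j = X} = {}"
    by (metis (mono_tags, lifting) empty_Collect_eq less_irrefl)
  moreover have "{..m-1} = {..<m}" using assms by auto
  ultimately show ?thesis using s_k_rec[OF X, of "m-1"] by simp
qed

lemma bin_lt: "(\<forall>i\<le>n. a i \<in> {0, 1}) \<Longrightarrow> (\<Sum>i\<le>n. a i * 2^i) < (2::nat)^(Suc n)"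
proof (induction n)
  case 0 then show ?case by auto
next
  case (Suc n)
  have "(\<Sum>i\<le>n. a i * 2^i) < (2::nat)^(Suc n)" using Suc by auto
  moreover have "a (Suc n) * 2^(Suc n) \<le> (2::nat)^(Suc n)" using Suc.prems by auto
  moreover have "(2::nat)^(Suc (Suc n)) = 2^(Suc n) + 2^(Suc n)" by simp
  moreover have "(\<Sum>i\<le>Suc n. a i * 2^i) = (\<Sum>i\<le>n. a i * 2^i) + a (Suc n) * (2::nat)^(Suc n)" by simp
  ultimately show ?case by linarith
qed

lemma bin_pos: "(\<exists>i\<le>n. a i \<noteq> 0) \<Longrightarrow> 0 < (\<Sum>i\<le>n. a i * (2::nat)^i)"
proof -
  assume "\<exists>i\<le>n. a i \<noteq> 0"
  then obtain i where i: "i \<le> n" "a i \<noteq> 0" by auto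
  then have "0 < a i * (2::nat)^i" by simp
  also have "\<dots> \<le> (\<Sum>i\<le>n. a i * (2::nat)^i)"
    by (rule member_le_sum) (use i in auto)
  finally show ?thesis .
qed

lemma gs_mm: "gs m m = 2^m" by (simp add: gs_def)

lemma pos2: "(0::nat) < 2^m" by simp

theorem theorem4p6:
  shows
  "s 0 = 1
   \<and> (s_k 0 1 = 1 \<and> (\<forall>k>0. s_k k 1 = 0))
   \<and> (s_k 0 2 = 0 \<and> s_k 1 2 = 1 \<and> (\<forall>k>1. s_k k 2 = 0))
   \<and> (\<forall>m\<ge>1.
        s_k m (2^m) = 1
      \<and> s_k (m - 1) (2^m) = (\<Sum>j<m. \<Sum>k<m - 1. s_k k (2^m - gs (m - 1) j))
      \<and> (\<forall>k. k \<noteq> m \<and> k \<noteq> m - 1 \<longrightarrow> s_k k (2^m) = 0))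
   \<and> (\<forall>m\<ge>1. \<forall>l<m.
        s_k m (gs m l) = 1 + (\<Sum>j\<in>{l..<m}. \<Sum>k<m. s_k k (gs j l))
      \<and> s_k (m - 1) (gs m l) = (\<Sum>j<m. \<Sum>k<m - 1. s_k k (gs m l - gs (m - 1) j))
      \<and> (\<forall>k. k \<noteq> m \<and> k \<noteq> m - 1 \<longrightarrow> s_k k (gs m l) = 0))
   \<and> (\<forall>m l (a :: nat \<Rightarrow> nat). 2 \<le> l \<and> l < m
        \<and> (\<forall>i\<le>l - 2. a i \<in> {0, 1}) \<and> (\<exists>i\<le>l - 2. a i \<noteq> 0) \<longrightarrow>
        (let A = (\<Sum>i\<le>l - 2. a i * 2^i); X = gs m l + A in
          s_k m X = (\<Sum>k<m. s_k k A) + (\<Sum>j\<in>{l..<m}. \<Sum>k<m. s_k k (gs j l + A))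
        \<and> s_k (m - 1) X = (\<Sum>j<m. \<Sum>k<m - 1. s_k k (X - gs (m - 1) j))
        \<and> (\<forall>k. k \<noteq> m \<and> k \<noteq> m - 1 \<longrightarrow> s_k k X = 0)))
   \<and> (\<forall>m (a :: nat \<Rightarrow> nat). 1 < m
        \<and> (\<forall>i\<le>m - 2. a i \<in> {0, 1}) \<and> (\<exists>i\<le>m - 2. a i \<noteq> 0) \<longrightarrow>
        (let B = (\<Sum>i\<le>m - 2. a i * 2^i); X = 2^m + B in
          s_k m X = (\<Sum>k<m. s_k k B)
        \<and> s_k (m - 1) X = (\<Sum>j<m. \<Sum>k<m - 1. s_k k (X - gs (m - 1) j))
        \<and> (\<forall>k. k \<noteq> m \<and> k \<noteq> m - 1 \<longrightarrow> s_k k X = 0)))"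
proof (intro conjI allI impI)
  show "s 0 = 1" by (simp add: s_def)
  have "{j. j \<le> 0 \<and> gs 0 j = 1} = {0}" by (auto simp: gs_def)
  then show "s_k 0 1 = 1" using s_k_rec[of 1 0] by simp
  show "s_k k 1 = 0" if "0 < k" for k
  proof (rule s_k_zero)
    have "(2::nat)^1 \<le> 2^k" using that power_increasing[of 1 k "2::nat"] by simp
    then show "(1::nat) < 2^k \<or> 2^(Suc (Suc k)) \<le> (1::nat)" by simp
  qed
  have "{j. j \<le> 0 \<and> gs 0 j = 2} = {}" by (auto simp: gs_def)
  then show "s_k 0 2 = 0" using s_k_rec[of 2 0] by simp
  show "s_k 1 2 = 1" using G[of 1 1 0] by (simp add: gs_def)
  show "s_k k 2 = 0" if "1 < k" for k
  proof (rule s_k_zero)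
    have "(2::nat)^2 \<le> 2^k" using that power_increasing[of 2 k "2::nat"] by simp
    then show "(2::nat) < 2^k \<or> 2^(Suc (Suc k)) \<le> (2::nat)" by simp
  qed
next
  fix m :: nat assume m: "1 \<le> m"
  show "s_k m (2^m) = 1" using G[of m m 0] by (simp add: gs_mm)
  show "s_k (m - 1) (2^m) = (\<Sum>j<m. \<Sum>k<m - 1. s_k k (2^m - gs (m - 1) j))"
    using L_m1[OF m] by simp
  fix k assume "k \<noteq> m \<and> k \<noteq> m - 1"
  then show "s_k k (2^m) = 0" using L_zero[of m "2^m" k] by simp
next
  fix m l :: nat assume m: "1 \<le> m" and l: "l < m"
  show "s_k m (gs m l) = 1 + (\<Sum>j\<in>{l..<m}. \<Sum>k<m. s_k k (gs j l))"
    using G[of l m 0] l by simp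
  have lo: "2^m \<le> gs m l" using gs_ge l by simp
  show "s_k (m - 1) (gs m l) = (\<Sum>j<m. \<Sum>k<m - 1. s_k k (gs m l - gs (m - 1) j))"
    using L_m1[OF m lo] .
  fix k assume "k \<noteq> m \<and> k \<noteq> m - 1"
  then show "s_k k (gs m l) = 0" using lo gs_lt[of m l] L_zero[of m "gs m l" k] by blast
next
  fix m l :: nat and a :: "nat \<Rightarrow> nat"
  assume h: "2 \<le> l \<and> l < m \<and> (\<forall>i\<le>l - 2. a i \<in> {0, 1}) \<and> (\<exists>i\<le>l - 2. a i \<noteq> 0)"
  define A where "A = (\<Sum>i\<le>l - 2. a i * 2^i)"
  have Suc: "Suc (l - 2) = l - 1" using h by linarith
  have Alt: "A < 2^(l-1)" using bin_lt[of "l-2" a] h Suc unfolding A_def by simp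
  have "0 < A" unfolding A_def by (rule bin_pos) (use h in blast)
  then have Apos: "A \<noteq> 0" by simp
  have lm: "l \<le> m" "1 \<le> m" using h by auto
  have lo: "2^m \<le> gs m l + A" using gs_ge[OF lm(1)] by simp
  have "(2::nat)^(l-1) \<le> 2^l" by (simp add: power_increasing)
  then have hi: "gs m l + A < 2^(Suc m)" using gs_eq[OF lm(1)] Alt by linarith
  show "let A = (\<Sum>i\<le>l - 2. a i * 2^i); X = gs m l + A in
          s_k m X = (\<Sum>k<m. s_k k A) + (\<Sum>j\<in>{l..<m}. \<Sum>k<m. s_k k (gs j l + A))
        \<and> s_k (m - 1) X = (\<Sum>j<m. \<Sum>k<m - 1. s_k k (X - gs (m - 1) j))
        \<and> (\<forall>k. k \<noteq> m \<and> k \<noteq> m - 1 \<longrightarrow> s_k k X = 0)"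
    unfolding Let_def A_def[symmetric]
  proof (intro conjI allI impI)
    show "s_k m (gs m l + A) = (\<Sum>k<m. s_k k A) + (\<Sum>j\<in>{l..<m}. \<Sum>k<m. s_k k (gs j l + A))"
      using G[OF lm(1) Alt] Apos by simp
    show "s_k (m - 1) (gs m l + A) = (\<Sum>j<m. \<Sum>k<m - 1. s_k k (gs m l + A - gs (m - 1) j))"
      using L_m1[OF lm(2) lo] .
    fix k assume "k \<noteq> m \<and> k \<noteq> m - 1"
    then show "s_k k (gs m l + A) = 0" using lo hi L_zero[of m "gs m l + A" k] by blast
  qed
next
  fix m :: nat and a :: "nat \<Rightarrow> nat"
  assume h: "1 < m \<and> (\<forall>i\<le>m - 2. a i \<in> {0, 1}) \<and> (\<exists>i\<le>m - 2. a i \<noteq> 0)"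
  define B where "B = (\<Sum>i\<le>m - 2. a i * 2^i)"
  have Suc: "Suc (m - 2) = m - 1" using h by linarith
  have Blt: "B < 2^(m-1)" using bin_lt[of "m-2" a] h Suc unfolding B_def by simp
  have "0 < B" unfolding B_def by (rule bin_pos) (use h in blast)
  then have Bpos: "B \<noteq> 0" by simp
  have m1: "1 \<le> m" using h by auto
  have lo: "2^m \<le> 2^m + B" by simp
  have "(2::nat)^(m-1) \<le> 2^m" by (simp add: power_increasing)
  moreover have "(2::nat)^(Suc m) = 2^m + 2^m" by simp
  ultimately have hi: "2^m + B < 2^(Suc m)" using Blt by linarith
  show "let B = (\<Sum>i\<le>m - 2. a i * 2^i); X = 2^m + B in
          s_k m X = (\<Sum>k<m. s_k k B)
        \<and> s_k (m - 1) X = (\<Sum>j<m. \<Sum>k<m - 1. s_k k (X - gs (m - 1) j))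
        \<and> (\<forall>k. k \<noteq> m \<and> k \<noteq> m - 1 \<longrightarrow> s_k k X = 0)"
    unfolding Let_def B_def[symmetric]
  proof (intro conjI allI impI)
    show "s_k m (2^m + B) = (\<Sum>k<m. s_k k B)"
      using G[OF order_refl Blt] Bpos by (simp add: gs_mm)
    show "s_k (m - 1) (2^m + B) = (\<Sum>j<m. \<Sum>k<m - 1. s_k k (2^m + B - gs (m - 1) j))"
      using L_m1[OF m1 lo] .
    fix k assume "k \<noteq> m \<and> k \<noteq> m - 1"
    then show "s_k k (2^m + B) = 0" using lo hi L_zero[of m "2^m + B" k] by blast
  qed
qed

end
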